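(* Each of the following holds, where each larger space is regarded as a metric space with the supremum-norm metric: (i) $c$ is strongly lower porous in $\widehat{c}$; (ii) $c_0$ is strongly lower porous in $\widehat{c_0}$; (iii) $\widehat{c}$ is strongly lower porous in $S$; (iv) $\widehat{c_0}$ is strongly lower porous in $S_0$; (v) $S$ is strongly lower porous in $\ell^\infty$.
   Context: $\ell^\infty$ is the space of bounded real sequences with the sup norm; $c$ and $c_0$ are the subspaces of convergent sequences and sequences convergent to $0$. A Banach limit is a linear functional $L\colon\ell^\infty\to\mathbb R$ such that for every $(x_n)\in\ell^\infty$: (1) if $x_n\ge0$ for all $n$ then $L((x_n))\ge0$; (2) $L((x_2,x_3,\dots))=L((x_1,x_2,\dots))$; (3) $L((1,1,\dots))=1$. $\widehat{c}$ is the set of $x\in\ell^\infty$ for which there is $s\in\mathbb R$ with $L(x)=s$ for every Banach limit $L$; $\widehat{c_0}$ is the set of $x\in\ell^\infty$ with $L(x)=0$ for every Banach limit $L$. $S=\{x\in\ell^\infty\colon\lim_n\frac{x_1+\dots+x_n}{n}\text{ exists}\}$, $S_0=\{x\in\ell^\infty\colon\lim_n\frac{x_1+\dots+x_n}{n}=0\}$. In a metric space $(Y,d)$, with $B(x,r)=\{y\colon d(x,y)<r\}$ and, for $E\subset Y$, $\gamma(x,R,E)=\sup\{r>0\colon\exists z\in Y,\ B(z,r)\subset B(x,R)\setminus E\}$, the lower porosity of $E$ at $x$ is $2\liminf_{r\to0^+}\gamma(x,r,E)/r$; $E$ is strongly lower porous in $Y$ if its lower porosity equals $1$ at every point of $E$.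 *)

theory Defs
  imports "HOL-Analysis.Analysis" "HOL-Library.Liminf_Limsup"
begin

text \<open>Real sequences are functions nat => real; the paper's x_1, x_2, ... is x 0, x 1, ...\<close>

definition linf :: "(nat \<Rightarrow> real) set" where
  "linf = {x. \<exists>B. \<forall>n. \<bar>x n\<bar> \<le> B}"

definition supdist :: "(nat \<Rightarrow> real) \<Rightarrow> (nat \<Rightarrow> real) \<Rightarrow> real" where
  "supdist x y = (SUP n. \<bar>x n - y n\<bar>)"

definition seq_c :: "(nat \<Rightarrow> real) set" where
  "seq_c = {x. convergent x}"

definition seq_c0 :: "(nat \<Rightarrow> real) set" where
  "seq_c0 = {x. x \<longlonglongrightarrow> 0}"

text \<open>Banach limit: a linear functional on linf (values outside linf are irrelevant).\<close>
definition banach_limit :: "((nat \<Rightarrow> real) \<Rightarrow> real) \<Rightarrow> bool" where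
  "banach_limit L \<longleftrightarrow>
     (\<forall>x\<in>linf. \<forall>y\<in>linf. \<forall>a b. L (\<lambda>n. a * x n + b * y n) = a * L x + b * L y) \<and>
     (\<forall>x\<in>linf. (\<forall>n. x n \<ge> 0) \<longrightarrow> L x \<ge> 0) \<and>
     (\<forall>x\<in>linf. L (\<lambda>n. x (Suc n)) = L x) \<and>
     L (\<lambda>n. 1) = 1"

definition c_hat :: "(nat \<Rightarrow> real) set" where
  "c_hat = {x\<in>linf. \<exists>s. \<forall>L. banach_limit L \<longrightarrow> L x = s}"

definition c0_hat :: "(nat \<Rightarrow> real) set" where
  "c0_hat = {x\<in>linf. \<forall>L. banach_limit L \<longrightarrow> L x = 0}"

definition cesaro_mean :: "(nat \<Rightarrow> real) \<Rightarrow> nat \<Rightarrow> real" where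
  "cesaro_mean x n = (\<Sum>i\<le>n. x i) / real (Suc n)"

definition seq_S :: "(nat \<Rightarrow> real) set" where
  "seq_S = {x\<in>linf. convergent (cesaro_mean x)}"

definition seq_S0 :: "(nat \<Rightarrow> real) set" where
  "seq_S0 = {x\<in>linf. cesaro_mean x \<longlonglongrightarrow> 0}"

definition mball :: "'a set \<Rightarrow> ('a \<Rightarrow> 'a \<Rightarrow> real) \<Rightarrow> 'a \<Rightarrow> real \<Rightarrow> 'a set" where
  "mball Y d x r = {y\<in>Y. d x y < r}"

text \<open>gamma(x,R,E); the supremum of the empty set is taken to be 0.\<close>
definition por_gamma :: "'a set \<Rightarrow> ('a \<Rightarrow> 'a \<Rightarrow> real) \<Rightarrow> 'a \<Rightarrow> real \<Rightarrow> 'a set \<Rightarrow> ereal" where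
  "por_gamma Y d x R E =
     Sup (insert 0 {ereal r | r. r > 0 \<and> (\<exists>z\<in>Y. mball Y d z r \<subseteq> mball Y d x R - E)})"

definition lower_porosity :: "'a set \<Rightarrow> ('a \<Rightarrow> 'a \<Rightarrow> real) \<Rightarrow> 'a set \<Rightarrow> 'a \<Rightarrow> ereal" where
  "lower_porosity Y d E x = 2 * Liminf (at_right 0) (\<lambda>r. por_gamma Y d x r E / ereal r)"

definition strongly_lower_porous :: "'a set \<Rightarrow> ('a \<Rightarrow> 'a \<Rightarrow> real) \<Rightarrow> 'a set \<Rightarrow> bool" where
  "strongly_lower_porous Y d E \<longleftrightarrow> (\<forall>x\<in>E. lower_porosity Y d E x = 1)"

end

theory Submission
  imports Defs
begin

definition goodfam :: "'a filter \<Rightarrow> 'a set set \<Rightarrow> bool" where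
  "goodfam F S \<longleftrightarrow> (\<forall>P. eventually P F \<longrightarrow> {x. P x} \<in> S) \<and> {} \<notin> S \<and>
     (\<forall>A\<in>S. \<forall>B\<in>S. A \<inter> B \<in> S) \<and> (\<forall>A\<in>S. \<forall>B. A \<subseteq> B \<longrightarrow> B \<in> S)"

definition ultra :: "'a filter \<Rightarrow> bool" where
  "ultra U \<longleftrightarrow> U \<noteq> bot \<and> (\<forall>A. eventually (\<lambda>n. n \<in> A) U \<or> eventually (\<lambda>n. n \<notin> A) U)"

lemma gfD1: "goodfam F S \<Longrightarrow> eventually P F \<Longrightarrow> {x. P x} \<in> S"
  unfolding goodfam_def by simp
lemma gfD2: "goodfam F S \<Longrightarrow> {} \<notin> S"
  unfolding goodfam_def by simp
lemma gfD3: "goodfam F S \<Longrightarrow> A \<in> S \<Longrightarrow> B \<in> S \<Longrightarrow> A \<inter> B \<in> S"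
  unfolding goodfam_def by simp
lemma gfD4: "goodfam F S \<Longrightarrow> A \<in> S \<Longrightarrow> A \<subseteq> B \<Longrightarrow> B \<in> S"
  unfolding goodfam_def by blast

lemma ultra_exists:
  assumes F: "F \<noteq> bot"
  shows "\<exists>U. ultra U \<and> U \<le> F"
proof -
  let ?A = "{S. goodfam F S}"
  have "\<exists>M\<in>?A. \<forall>X\<in>?A. M \<subseteq> X \<longrightarrow> X = M"
  proof (rule Zorn_Lemma2, intro ballI)
    fix C assume C: "C \<in> chains ?A"
    show "\<exists>U\<in>?A. \<forall>X\<in>C. X \<subseteq> U"
    proof (cases "C = {}")
      case True
      have "goodfam F {S. eventually (\<lambda>x. x \<in> S) F}"
        unfolding goodfam_def using F
        by (auto simp: eventually_conj_iff elim: eventually_mono)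
      then show ?thesis using True by blast
    next
      case False
      have ch: "\<forall>X\<in>C. \<forall>Y\<in>C. X \<subseteq> Y \<or> Y \<subseteq> X" and sub: "C \<subseteq> ?A"
        using C unfolding chains_def chain_subset_def by auto
      have "goodfam F (\<Union>C)"
        unfolding goodfam_def
      proof (intro conjI allI impI ballI)
        fix P assume "eventually P F"
        obtain X where X: "X \<in> C" using False by blast
        with sub have "goodfam F X" by blast
        then have "{x. P x} \<in> X" using \<open>eventually P F\<close> by (rule gfD1)
        then show "{x. P x} \<in> \<Union>C" using X by blast
      next
        show "{} \<notin> \<Union>C" using sub gfD2 by blast
      next
        fix A B assume "A \<in> \<Union>C" "B \<in> \<Union>C"
        then obtain X Y where XY: "X \<in> C" "Y \<in> C" "A \<in> X" "B \<in> Y" by blast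
        show "A \<inter> B \<in> \<Union>C"
        proof (cases "X \<subseteq> Y")
          case True then have "goodfam F Y" "A \<in> Y" using XY sub by auto
          then show ?thesis using XY gfD3 by blast
        next
          case False then have "Y \<subseteq> X" using ch XY by blast
          then have "goodfam F X" "B \<in> X" using XY sub by auto
          then show ?thesis using XY gfD3 by blast
        qed
      next
        fix A B assume "A \<in> \<Union>C" "A \<subseteq> B"
        then show "B \<in> \<Union>C" using sub gfD4 by blast
      qed
      then show ?thesis by blast
    qed
  qed
  then obtain M where M: "goodfam F M" and max: "\<And>X. goodfam F X \<Longrightarrow> M \<subseteq> X \<Longrightarrow> X = M"
    by blast
  define U where "U = (INF S\<in>M. principal S)"
  have "{x. True} \<in> M" using gfD1[OF M, of "\<lambda>x. True"] by simp
  then have Mne: "M \<noteq> {}" by blast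
  have evU: "eventually P U \<longleftrightarrow> {x. P x} \<in> M" for P
  proof -
    have "eventually P U \<longleftrightarrow> (\<exists>S\<in>M. eventually P (principal S))"
      unfolding U_def
    proof (rule eventually_INF_base[OF Mne])
      fix a b assume "a \<in> M" "b \<in> M"
      then have "a \<inter> b \<in> M" by (rule gfD3[OF M])
      moreover have "principal (a \<inter> b) \<le> inf (principal a) (principal b)"
        by (simp add: inf_principal)
      ultimately show "\<exists>x\<in>M. principal x \<le> inf (principal a) (principal b)" by blast
    qed
    also have "\<dots> \<longleftrightarrow> {x. P x} \<in> M"
      unfolding eventually_principal
    proof
      assume "\<exists>S\<in>M. \<forall>x\<in>S. P x"
      then obtain S where "S \<in> M" "S \<subseteq> {x. P x}" by blast
      then show "{x. P x} \<in> M" using gfD4[OF M] by blast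
    qed auto
    finally show ?thesis .
  qed
  have "U \<noteq> bot"
  proof
    assume "U = bot"
    then have "eventually (\<lambda>x. False) U" by simp
    then show False using gfD2[OF M] evU by simp
  qed
  moreover have "U \<le> F"
    unfolding le_filter_def using gfD1[OF M] evU by blast
  moreover have "eventually (\<lambda>n. n \<in> A) U \<or> eventually (\<lambda>n. n \<notin> A) U" for A
  proof (rule ccontr)
    assume nn: "\<not> ?thesis"
    then have nA: "A \<notin> M" and nA': "-A \<notin> M" using evU by (auto simp: Compl_eq)
    define M' where "M' = {T. \<exists>S\<in>M. S \<inter> A \<subseteq> T}"
    have "goodfam F M'"
      unfolding goodfam_def
    proof (intro conjI allI impI ballI)
      fix P assume "eventually P F"
      then have "{x. P x} \<in> M" using gfD1[OF M] by blast
      then show "{x. P x} \<in> M'" unfolding M'_def by blast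
    next
      show "{} \<notin> M'"
      proof
        assume "{} \<in> M'"
        then obtain S where "S \<in> M" "S \<inter> A \<subseteq> {}" unfolding M'_def by blast
        then have "S \<subseteq> -A" by blast
        then show False using gfD4[OF M] nA' \<open>S \<in> M\<close> by blast
      qed
    next
      fix X Y assume "X \<in> M'" "Y \<in> M'"
      then obtain S T where "S \<in> M" "T \<in> M" "S \<inter> A \<subseteq> X" "T \<inter> A \<subseteq> Y" unfolding M'_def by blast
      then show "X \<inter> Y \<in> M'" using gfD3[OF M] unfolding M'_def
        by (intro CollectI bexI[of _ "S \<inter> T"]) auto
    next
      fix X Y assume "X \<in> M'" "X \<subseteq> Y"
      then show "Y \<in> M'" unfolding M'_def by blast
    qed
    moreover have "M \<subseteq> M'" unfolding M'_def by blast
    ultimately have "M' = M" using max by blast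
    moreover have "A \<in> M'" unfolding M'_def using Mne by blast
    ultimately show False using nA by blast
  qed
  ultimately show ?thesis unfolding ultra_def by blast
qed

lemma ultra_lim:
  fixes f :: "'a \<Rightarrow> real"
  assumes U: "ultra U" and B: "\<And>n. \<bar>f n\<bar> \<le> B"
  shows "\<exists>s. (f \<longlongrightarrow> s) U"
proof -
  have "compact {-B..B}" by simp
  moreover have "filtermap f U \<noteq> bot" using U unfolding ultra_def by (simp add: filtermap_bot_iff)
  moreover have "eventually (\<lambda>x. x \<in> {-B..B}) (filtermap f U)"
    unfolding eventually_filtermap
  proof (intro always_eventually allI)
    fix n
    show "f n \<in> {-B..B}" using abs_le_D1[OF B[of n]] abs_le_D2[OF B[of n]] by simp
  qed
  ultimately obtain s where s: "inf (nhds s) (filtermap f U) \<noteq> bot"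
    unfolding compact_filter by blast
  have "(f \<longlongrightarrow> s) U"
    unfolding tendsto_def
  proof (intro allI impI)
    fix S :: "real set" assume "open S" "s \<in> S"
    show "eventually (\<lambda>n. f n \<in> S) U"
    proof (rule ccontr)
      assume "\<not> ?thesis"
      moreover have "eventually (\<lambda>n. n \<in> f -` S) U \<or> eventually (\<lambda>n. n \<notin> f -` S) U"
        using U unfolding ultra_def by blast
      ultimately have "eventually (\<lambda>n. n \<notin> f -` S) U" by simp
      then have "eventually (\<lambda>x. x \<notin> S) (filtermap f U)" by (simp add: eventually_filtermap)
      moreover have "eventually (\<lambda>x. x \<in> S) (nhds s)" using \<open>open S\<close> \<open>s \<in> S\<close> eventually_nhds by blast
      ultimately have "eventually (\<lambda>x. False) (inf (nhds s) (filtermap f U))"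
        unfolding eventually_inf by blast
      then show False using s by (simp add: eventually_False)
    qed
  qed
  then show ?thesis by blast
qed


lemma linf_bound: "x \<in> linf \<Longrightarrow> \<exists>B. \<forall>n. \<bar>x n\<bar> \<le> B"
  unfolding linf_def by blast

lemma linfI: "(\<And>n. \<bar>x n\<bar> \<le> B) \<Longrightarrow> x \<in> linf"
  unfolding linf_def by blast

lemma supdist_ge:
  assumes "x \<in> linf" "y \<in> linf"
  shows "\<bar>x n - y n\<bar> \<le> supdist x y"
proof -
  obtain A B where A: "\<And>n. \<bar>x n\<bar> \<le> A" and B: "\<And>n. \<bar>y n\<bar> \<le> B"
    using assms linf_bound by metis
  have "\<bar>x m - y m\<bar> \<le> A + B" for m
    using A[of m] B[of m] by linarith
  then have bdd: "bdd_above (range (\<lambda>n. \<bar>x n - y n\<bar>))" by (rule bdd_aboveI2)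
  show ?thesis unfolding supdist_def by (rule cSUP_upper[OF UNIV_I bdd])
qed

lemma supdist_le:
  assumes "\<And>n. \<bar>x n - y n\<bar> \<le> c"
  shows "supdist x y \<le> c"
  unfolding supdist_def using assms by (intro cSUP_least) auto

lemma supdist_sym: "supdist x y = supdist y x"
  unfolding supdist_def by (simp add: abs_minus_commute)

lemma supdist_triangle:
  assumes "x \<in> linf" "y \<in> linf" "z \<in> linf"
  shows "supdist x z \<le> supdist x y + supdist y z"
proof (rule supdist_le)
  fix n
  have "\<bar>x n - z n\<bar> \<le> \<bar>x n - y n\<bar> + \<bar>y n - z n\<bar>" by linarith
  also have "\<dots> \<le> supdist x y + supdist y z"
    using supdist_ge[OF assms(1,2)] supdist_ge[OF assms(2,3)] by (intro add_mono) auto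
  finally show "\<bar>x n - z n\<bar> \<le> supdist x y + supdist y z" .
qed

lemma gamma_upper:
  assumes Ylinf: "Y \<subseteq> linf" and EY: "E \<subseteq> Y"
   and aff: "\<And>u v t. u\<in>Y \<Longrightarrow> v\<in>Y \<Longrightarrow> t \<ge> 0 \<Longrightarrow> (\<lambda>n. u n + t*(u n - v n)) \<in> Y"
   and x: "x \<in> E" and r: "r > 0" and z: "z \<in> Y"
   and sub: "mball Y supdist z r \<subseteq> mball Y supdist x R - E"
  shows "r \<le> R / 2"
proof (rule ccontr)
  assume rR: "\<not> r \<le> R / 2"
  have xY: "x \<in> Y" using x EY by blast
  have xl: "x \<in> linf" and zl: "z \<in> linf" using xY z Ylinf by auto
  define d where "d = supdist z x"
  have "d \<ge> r"
  proof (rule ccontr)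
    assume "\<not> d \<ge> r"
    then have "x \<in> mball Y supdist z r" using xY unfolding mball_def d_def by auto
    then show False using sub x by blast
  qed
  have "supdist z z \<le> 0" by (rule supdist_le) simp
  then have "z \<in> mball Y supdist z r" using z r unfolding mball_def by auto
  then have "supdist x z < R" using sub unfolding mball_def by auto
  then have dR: "d < R" unfolding d_def by (simp add: supdist_sym)
  have dpos: "d > 0" using \<open>d \<ge> r\<close> r by linarith
  define t where "t = (R - d) / d"
  have t0: "t \<ge> 0" unfolding t_def using dR dpos by simp
  have td: "t * d = R - d" unfolding t_def using dpos by simp
  define w where "w = (\<lambda>n. z n + t*(z n - x n))"
  have wY: "w \<in> Y" unfolding w_def using aff z xY t0 by blast
  have wl: "w \<in> linf" using wY Ylinf by blast
  have "supdist z w \<le> t * d"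
  proof (rule supdist_le)
    fix n
    have "\<bar>z n - w n\<bar> = t * \<bar>z n - x n\<bar>" unfolding w_def using t0 by (simp add: abs_mult)
    also have "\<dots> \<le> t * d" unfolding d_def using supdist_ge[OF zl xl] t0 by (simp add: mult_left_mono)
    finally show "\<bar>z n - w n\<bar> \<le> t * d" .
  qed
  also have "t * d < r" using td \<open>d \<ge> r\<close> rR by linarith
  finally have "w \<in> mball Y supdist z r" using wY unfolding mball_def by auto
  then have wx: "supdist x w < R" using sub unfolding mball_def by auto
  have "d \<le> supdist x w / (1 + t)"
    unfolding d_def
  proof (rule supdist_le)
    fix n
    have e: "x n - w n = (1 + t) * (x n - z n)" unfolding w_def by (simp add: algebra_simps)
    have "\<bar>x n - w n\<bar> = (1 + t) * \<bar>x n - z n\<bar>" unfolding e using t0 by (simp add: abs_mult)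
    then have "\<bar>x n - w n\<bar> = (1 + t) * \<bar>z n - x n\<bar>" by (simp add: abs_minus_commute)
    then have "\<bar>z n - x n\<bar> = \<bar>x n - w n\<bar> / (1 + t)" using t0 by (simp add: field_simps)
    also have "\<dots> \<le> supdist x w / (1 + t)" using supdist_ge[OF xl wl] t0
      by (simp add: divide_right_mono)
    finally show "\<bar>z n - x n\<bar> \<le> supdist x w / (1 + t)" .
  qed
  then have "(1 + t) * d \<le> supdist x w" using t0 by (simp add: field_simps)
  moreover have "(1 + t) * d = R" using td by (simp add: algebra_simps)
  ultimately show False using wx by linarith
qed

lemma porous_generic:
  assumes Ylinf: "Y \<subseteq> linf" and EY: "E \<subseteq> Y"
   and aff: "\<And>u v t. u\<in>Y \<Longrightarrow> v\<in>Y \<Longrightarrow> t \<ge> 0 \<Longrightarrow> (\<lambda>n. u n + t*(u n - v n)) \<in> Y"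
   and sep: "\<And>x R. x\<in>E \<Longrightarrow> R>0 \<Longrightarrow> \<exists>z\<in>Y. supdist x z \<le> R/2 \<and> (\<forall>w\<in>Y. supdist z w < R/2 \<longrightarrow> w \<notin> E)"
  shows "strongly_lower_porous Y supdist E"
  unfolding strongly_lower_porous_def
proof
  fix x assume x: "x \<in> E"
  have xl: "x \<in> linf" using x EY Ylinf by blast
  have gam: "por_gamma Y supdist x R E = ereal (R/2)" if R: "R > 0" for R
  proof -
    obtain z where z: "z \<in> Y" "supdist x z \<le> R/2" and zs: "\<forall>w\<in>Y. supdist z w < R/2 \<longrightarrow> w \<notin> E"
      using sep[OF x R] by blast
    have zl: "z \<in> linf" using z Ylinf by blast
    have mem: "ereal (R/2) \<in> {ereal r | r. r > 0 \<and> (\<exists>z\<in>Y. mball Y supdist z r \<subseteq> mball Y supdist x R - E)}"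
    proof -
      have "mball Y supdist z (R/2) \<subseteq> mball Y supdist x R - E"
      proof
        fix w assume "w \<in> mball Y supdist z (R/2)"
        then have w: "w \<in> Y" "supdist z w < R/2" unfolding mball_def by auto
        have "supdist x w \<le> supdist x z + supdist z w"
          using supdist_triangle[OF xl zl] w Ylinf by blast
        then have "supdist x w < R" using z w by linarith
        then show "w \<in> mball Y supdist x R - E" using w zs unfolding mball_def by auto
      qed
      note inc = this
      show ?thesis
        apply (rule CollectI)
        apply (rule exI[of _ "R/2"])
        using R by (intro conjI refl bexI[of _ z] inc z(1)) simp
    qed
    show ?thesis
      unfolding por_gamma_def
    proof (rule antisym)
      show "Sup (insert 0 {ereal r | r. r > 0 \<and> (\<exists>z\<in>Y. mball Y supdist z r \<subseteq> mball Y supdist x R - E)}) \<le> ereal (R/2)"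
      proof (rule Sup_least)
        fix y assume "y \<in> insert 0 {ereal r | r. r > 0 \<and> (\<exists>z\<in>Y. mball Y supdist z r \<subseteq> mball Y supdist x R - E)}"
        then show "y \<le> ereal (R/2)"
        proof
          assume "y = 0" then show ?thesis using R by simp
        next
          assume "y \<in> {ereal r | r. r > 0 \<and> (\<exists>z\<in>Y. mball Y supdist z r \<subseteq> mball Y supdist x R - E)}"
          then obtain r z' where "y = ereal r" "r > 0" "z' \<in> Y" "mball Y supdist z' r \<subseteq> mball Y supdist x R - E"
            by blast
          then have "r \<le> R/2" using gamma_upper[OF Ylinf EY aff x] by blast
          then show ?thesis using \<open>y = ereal r\<close> by simp
        qed
      qed
    next
      show "ereal (R/2) \<le> Sup (insert 0 {ereal r | r. r > 0 \<and> (\<exists>z\<in>Y. mball Y supdist z r \<subseteq> mball Y supdist x R - E)})"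
        using mem by (intro Sup_upper) blast
    qed
  qed
  have "eventually (\<lambda>r. por_gamma Y supdist x r E / ereal r = ereal (1/2)) (at_right 0)"
  proof -
    have "eventually (\<lambda>r::real. r > 0) (at_right 0)" by (simp add: eventually_at_right_less)
    then show "eventually (\<lambda>r. por_gamma Y supdist x r E / ereal r = ereal (1/2)) (at_right 0)"
      by (rule eventually_mono) (simp add: gam)
  qed
  then have "Liminf (at_right 0) (\<lambda>r. por_gamma Y supdist x r E / ereal r) = Liminf (at_right (0::real)) (\<lambda>r. ereal (1/2))"
    by (rule Liminf_eq)
  also have "\<dots> = ereal (1/2)" by (rule Liminf_const) simp
  finally show "lower_porosity Y supdist E x = 1"
    unfolding lower_porosity_def by simp
qed


definition wavg :: "(nat \<Rightarrow> nat) \<Rightarrow> (nat \<Rightarrow> real) \<Rightarrow> nat \<Rightarrow> real" where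
  "wavg m x n = (\<Sum>i<Suc n. x (m n + i)) / real (Suc n)"

definition WL :: "nat filter \<Rightarrow> (nat \<Rightarrow> nat) \<Rightarrow> (nat \<Rightarrow> real) \<Rightarrow> real" where
  "WL U m x = Lim U (wavg m x)"

lemma wavg_bound:
  assumes "\<And>i. \<bar>x i\<bar> \<le> B"
  shows "\<bar>wavg m x n\<bar> \<le> B"
proof -
  have "\<bar>\<Sum>i<Suc n. x (m n + i)\<bar> \<le> (\<Sum>i<Suc n. \<bar>x (m n + i)\<bar>)" by (rule sum_abs)
  also have "\<dots> \<le> (\<Sum>i<Suc n. B)" by (rule sum_mono) (rule assms)
  also have "\<dots> = real (Suc n) * B" by simp
  finally show ?thesis unfolding wavg_def by (simp add: field_simps)
qed

lemma ultra_nonbot: "ultra U \<Longrightarrow> U \<noteq> bot"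
  unfolding ultra_def by blast

lemma WL_tendsto:
  assumes U: "ultra U" and x: "x \<in> linf"
  shows "(wavg m x \<longlongrightarrow> WL U m x) U"
proof -
  obtain B where "\<And>n. \<bar>x n\<bar> \<le> B" using linf_bound[OF x] by blast
  then have "\<And>n. \<bar>wavg m x n\<bar> \<le> B" by (rule wavg_bound)
  then obtain s where s: "(wavg m x \<longlongrightarrow> s) U" using ultra_lim[OF U] by blast
  have "WL U m x = s" unfolding WL_def using s ultra_nonbot[OF U] by (intro tendsto_Lim) auto
  then show ?thesis using s by simp
qed

lemma WL_eq:
  assumes U: "ultra U" and "(wavg m x \<longlongrightarrow> s) U"
  shows "WL U m x = s"
  unfolding WL_def using assms ultra_nonbot[OF U] by (intro tendsto_Lim) auto

lemma wavg_lin: "wavg m (\<lambda>n. a * x n + b * y n) n = a * wavg m x n + b * wavg m y n"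
proof -
  have "(\<Sum>i<Suc n. a * x (m n + i) + b * y (m n + i)) = a * (\<Sum>i<Suc n. x (m n + i)) + b * (\<Sum>i<Suc n. y (m n + i))"
    by (simp add: sum.distrib sum_distrib_left del: sum.lessThan_Suc)
  then show ?thesis unfolding wavg_def by (simp add: add_divide_distrib del: sum.lessThan_Suc)
qed

lemma wavg_const: "wavg m (\<lambda>n. c) n = c"
  unfolding wavg_def by simp

lemma wavg_shift_diff:
  "wavg m (\<lambda>i. x (Suc i)) n - wavg m x n = (x (m n + Suc n) - x (m n)) / real (Suc n)"
proof -
  have "(\<Sum>i<Suc n. x (Suc (m n + i))) - (\<Sum>i<Suc n. x (m n + i))
        = (\<Sum>i<Suc n. x (m n + Suc i) - x (m n + i))" by (simp add: sum_subtractf del: sum.lessThan_Suc)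
  also have "\<dots> = x (m n + Suc n) - x (m n + 0)"
    by (rule sum_lessThan_telescope[where f = "\<lambda>i. x (m n + i)"])
  finally have "(\<Sum>i<Suc n. x (Suc (m n + i))) - (\<Sum>i<Suc n. x (m n + i)) = x (m n + Suc n) - x (m n)"
    by simp
  then show ?thesis unfolding wavg_def by (simp add: diff_divide_distrib[symmetric] del: sum.lessThan_Suc)
qed

lemma lim_over_Suc: "(\<lambda>n. c / real (Suc n)) \<longlonglongrightarrow> 0"
  using LIMSEQ_Suc[OF lim_const_over_n[of c]] by simp

lemma WL_banach:
  assumes U: "ultra U" and Us: "U \<le> sequentially"
  shows "banach_limit (WL U m)"
  unfolding banach_limit_def
proof (intro conjI ballI allI impI)
  have nb: "U \<noteq> bot" by (rule ultra_nonbot[OF U])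
  fix x y a b assume x: "x \<in> linf" and y: "y \<in> linf"
  have "((\<lambda>n. a * wavg m x n + b * wavg m y n) \<longlongrightarrow> a * WL U m x + b * WL U m y) U"
    by (intro tendsto_intros WL_tendsto U x y)
  moreover have eq: "wavg m (\<lambda>n. a * x n + b * y n) = (\<lambda>n. a * wavg m x n + b * wavg m y n)"
    by (rule ext, rule wavg_lin)
  ultimately have "(wavg m (\<lambda>n. a * x n + b * y n) \<longlongrightarrow> a * WL U m x + b * WL U m y) U"
    by simp
  then show "WL U m (\<lambda>n. a * x n + b * y n) = a * WL U m x + b * WL U m y"
    by (rule WL_eq[OF U])
next
  fix x assume x: "x \<in> linf" and pos: "\<forall>n. 0 \<le> x n"
  have "\<forall>n. 0 \<le> wavg m x n" unfolding wavg_def using pos by (simp add: sum_nonneg)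
  then show "0 \<le> WL U m x"
    using WL_tendsto[OF U x] ultra_nonbot[OF U]
    by (intro tendsto_lowerbound[of "wavg m x" _ U]) (auto intro: always_eventually)
next
  fix x assume x: "x \<in> linf"
  obtain B where B: "\<And>n. \<bar>x n\<bar> \<le> B" using linf_bound[OF x] by blast
  have "((\<lambda>n. (x (m n + Suc n) - x (m n)) / real (Suc n)) \<longlongrightarrow> 0) sequentially"
  proof (rule Lim_null_comparison)
    show "eventually (\<lambda>n. norm ((x (m n + Suc n) - x (m n)) / real (Suc n)) \<le> 2 * B / real (Suc n)) sequentially"
    proof (intro always_eventually allI)
      fix n
      have "\<bar>x (m n + Suc n) - x (m n)\<bar> \<le> 2 * B" using B[of "m n + Suc n"] B[of "m n"] by linarith
      then show "norm ((x (m n + Suc n) - x (m n)) / real (Suc n)) \<le> 2 * B / real (Suc n)"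
        by (simp add: divide_right_mono)
    qed
    show "(\<lambda>n. 2 * B / real (Suc n)) \<longlonglongrightarrow> 0" by (rule lim_over_Suc)
  qed
  then have "((\<lambda>n. (x (m n + Suc n) - x (m n)) / real (Suc n)) \<longlongrightarrow> 0) U"
    by (rule tendsto_mono[OF Us])
  then have "((\<lambda>n. wavg m x n + (x (m n + Suc n) - x (m n)) / real (Suc n)) \<longlongrightarrow> WL U m x + 0) U"
    by (intro tendsto_add WL_tendsto[OF U x])
  moreover have "wavg m (\<lambda>i. x (Suc i)) = (\<lambda>n. wavg m x n + (x (m n + Suc n) - x (m n)) / real (Suc n))"
    using wavg_shift_diff[of m x] by (intro ext) (simp add: algebra_simps)
  ultimately have "(wavg m (\<lambda>i. x (Suc i)) \<longlongrightarrow> WL U m x) U"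
    by simp
  then show "WL U m (\<lambda>n. x (Suc n)) = WL U m x" by (rule WL_eq[OF U])
next
  have "wavg m (\<lambda>n. 1) = (\<lambda>n. 1)" by (rule ext) (rule wavg_const)
  then show "WL U m (\<lambda>n. 1) = 1" by (intro WL_eq[OF U]) simp
qed

lemma cesaro_wavg: "cesaro_mean x = wavg (\<lambda>n. 0) x"
  unfolding cesaro_mean_def wavg_def by (simp add: lessThan_Suc_atMost fun_eq_iff)

lemma ultra_free_exists:
  assumes "infinite (A :: nat set)"
  shows "\<exists>U. ultra U \<and> U \<le> sequentially \<and> eventually (\<lambda>n. n \<in> A) U"
proof -
  have "inf sequentially (principal A) \<noteq> bot"
  proof
    assume "inf sequentially (principal A) = bot"
    then have "eventually (\<lambda>n. False) (inf sequentially (principal A))" by simp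
    then have "eventually (\<lambda>n. n \<in> A \<longrightarrow> False) sequentially"
      unfolding eventually_inf_principal .
    then obtain N where "\<forall>n\<ge>N. n \<notin> A" unfolding eventually_sequentially by blast
    then have "A \<subseteq> {..<N}" by (auto simp: not_le[symmetric])
    then show False using assms finite_subset by blast
  qed
  then obtain U where U: "ultra U" "U \<le> inf sequentially (principal A)" using ultra_exists by blast
  then have "U \<le> sequentially" "U \<le> principal A" by auto
  moreover have "eventually (\<lambda>n. n \<in> A) (principal A)" by (simp add: eventually_principal)
  ultimately show ?thesis using U(1) by (blast intro: filter_leD)
qed

lemma ultra_determine:
  fixes f :: "nat \<Rightarrow> real"
  assumes all: "\<And>U. ultra U \<Longrightarrow> U \<le> sequentially \<Longrightarrow> (f \<longlongrightarrow> s) U"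
  shows "f \<longlonglongrightarrow> s"
proof (rule ccontr)
  assume "\<not> f \<longlonglongrightarrow> s"
  then obtain r where r: "r > 0" and fr: "\<forall>N. \<exists>n\<ge>N. \<not> dist (f n) s < r"
    unfolding tendsto_iff eventually_sequentially by blast
  define A where "A = {n. \<not> dist (f n) s < r}"
  have "infinite A" unfolding A_def infinite_nat_iff_unbounded_le using fr by blast
  then obtain U where U: "ultra U" "U \<le> sequentially" and ev: "eventually (\<lambda>n. n \<in> A) U"
    using ultra_free_exists by blast
  have "eventually (\<lambda>n. dist (f n) s < r) U" using all[OF U] r unfolding tendsto_iff by blast
  with ev have "eventually (\<lambda>n. False) U" unfolding A_def by (auto elim: eventually_elim2)
  then show False using ultra_nonbot[OF U(1)] by (simp add: eventually_False)
qed


lemma BL_lin: "banach_limit L \<Longrightarrow> x \<in> linf \<Longrightarrow> y \<in> linf \<Longrightarrow>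
    L (\<lambda>n. a * x n + b * y n) = a * L x + b * L y"
  unfolding banach_limit_def by blast

lemma BL_pos: "banach_limit L \<Longrightarrow> x \<in> linf \<Longrightarrow> (\<And>n. x n \<ge> 0) \<Longrightarrow> L x \<ge> 0"
  unfolding banach_limit_def by blast

lemma BL_shift: "banach_limit L \<Longrightarrow> x \<in> linf \<Longrightarrow> L (\<lambda>n. x (Suc n)) = L x"
  unfolding banach_limit_def by blast

lemma BL_one: "banach_limit L \<Longrightarrow> L (\<lambda>n. 1) = 1"
  unfolding banach_limit_def by blast

lemma const_linf: "(\<lambda>n. c) \<in> linf"
  by (rule linfI[of _ "\<bar>c\<bar>"]) simp

lemma lin_linf: "x \<in> linf \<Longrightarrow> y \<in> linf \<Longrightarrow> (\<lambda>n. a * x n + b * y n) \<in> linf"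
proof -
  assume x: "x \<in> linf" and y: "y \<in> linf"
  obtain A B where A: "\<And>n. \<bar>x n\<bar> \<le> A" and B: "\<And>n. \<bar>y n\<bar> \<le> B"
    using x y linf_bound by metis
  show ?thesis
  proof (rule linfI)
    fix n
    have "\<bar>a * x n + b * y n\<bar> \<le> \<bar>a\<bar> * \<bar>x n\<bar> + \<bar>b\<bar> * \<bar>y n\<bar>"
      by (metis abs_mult abs_triangle_ineq)
    also have "\<dots> \<le> \<bar>a\<bar> * A + \<bar>b\<bar> * B"
      by (intro add_mono mult_left_mono A B) auto
    finally show "\<bar>a * x n + b * y n\<bar> \<le> \<bar>a\<bar> * A + \<bar>b\<bar> * B" .
  qed
qed

lemma BL_const: "banach_limit L \<Longrightarrow> L (\<lambda>n. c) = c"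
proof -
  assume L: "banach_limit L"
  have "L (\<lambda>n. c * 1 + 0 * 1) = c * L (\<lambda>n. 1) + 0 * L (\<lambda>n. 1)"
    by (rule BL_lin[OF L const_linf const_linf])
  then show ?thesis using BL_one[OF L] by simp
qed

lemma BL_mono:
  assumes L: "banach_limit L" and x: "x \<in> linf" and y: "y \<in> linf" and le: "\<And>n. x n \<le> y n"
  shows "L x \<le> L y"
proof -
  have "L (\<lambda>n. 1 * y n + (-1) * x n) = 1 * L y + (-1) * L x"
    by (rule BL_lin[OF L y x])
  moreover have "L (\<lambda>n. 1 * y n + (-1) * x n) \<ge> 0"
    using le by (intro BL_pos[OF L] lin_linf y x) simp
  ultimately show ?thesis by simp
qed

lemma shiftN_linf: "x \<in> linf \<Longrightarrow> (\<lambda>n. x (n + N)) \<in> linf"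
  using linf_bound[of x] linfI[of "\<lambda>n. x (n + N)"] by metis

lemma BL_shiftN:
  assumes L: "banach_limit L" and x: "x \<in> linf"
  shows "L (\<lambda>n. x (n + N)) = L x"
proof (induction N)
  case 0 then show ?case by simp
next
  case (Suc N)
  have "L (\<lambda>n. (\<lambda>k. x (k + N)) (Suc n)) = L (\<lambda>k. x (k + N))"
    by (rule BL_shift[OF L shiftN_linf[OF x]])
  then show ?case using Suc by simp
qed

lemma conv_linf: "x \<longlonglongrightarrow> l \<Longrightarrow> x \<in> linf"
proof -
  assume "x \<longlonglongrightarrow> l"
  then have "Bseq x" by (intro convergent_imp_Bseq convergentI)
  then obtain K where "\<And>n. norm (x n) \<le> K" unfolding Bseq_def by blast
  then show ?thesis by (intro linfI[of _ K]) simp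
qed

lemma BL_conv:
  assumes L: "banach_limit L" and lim: "x \<longlonglongrightarrow> l"
  shows "L x = l"
proof (rule ccontr)
  assume ne: "L x \<noteq> l"
  define e where "e = \<bar>L x - l\<bar> / 2"
  have e: "e > 0" using ne unfolding e_def by simp
  have x: "x \<in> linf" using lim by (rule conv_linf)
  obtain N where N: "\<And>n. n \<ge> N \<Longrightarrow> \<bar>x n - l\<bar> < e"
    using lim e unfolding LIMSEQ_iff by auto
  have y: "(\<lambda>n. x (n + N)) \<in> linf" by (rule shiftN_linf[OF x])
  have Nb: "l - e \<le> x (n + N) \<and> x (n + N) \<le> l + e" for n
  proof -
    have "\<bar>x (n + N) - l\<bar> < e" by (rule N) simp
    then show ?thesis by (auto simp: abs_less_iff)
  qed
  have "L (\<lambda>n. l - e) \<le> L (\<lambda>n. x (n + N))"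
    using Nb by (intro BL_mono[OF L const_linf y]) blast
  moreover have "L (\<lambda>n. x (n + N)) \<le> L (\<lambda>n. l + e)"
    using Nb by (intro BL_mono[OF L y const_linf]) blast
  ultimately have "\<bar>L x - l\<bar> \<le> e"
    using BL_shiftN[OF L x] BL_const[OF L] by (simp add: abs_le_iff)
  then show False using e unfolding e_def by simp
qed

lemma c_sub_chat: "seq_c \<subseteq> c_hat"
proof
  fix x assume "x \<in> seq_c"
  then obtain l where l: "x \<longlonglongrightarrow> l" unfolding seq_c_def convergent_def by blast
  then show "x \<in> c_hat" unfolding c_hat_def using conv_linf BL_conv by blast
qed

lemma c0_sub_c0hat: "seq_c0 \<subseteq> c0_hat"
  unfolding seq_c0_def c0_hat_def using conv_linf BL_conv by blast

lemma c0_sub_c: "seq_c0 \<subseteq> seq_c"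
  unfolding seq_c0_def seq_c_def convergent_def by blast

lemma c0hat_sub_chat: "c0_hat \<subseteq> c_hat"
  unfolding c0_hat_def c_hat_def by blast

lemma S0_sub_S: "seq_S0 \<subseteq> seq_S"
  unfolding seq_S0_def seq_S_def convergent_def by blast

lemma ultra_seq_exists: "\<exists>U. ultra U \<and> U \<le> sequentially"
  using ultra_exists[of sequentially] by simp

lemma chat_cesaro:
  assumes x: "x \<in> linf" and all: "\<And>L. banach_limit L \<Longrightarrow> L x = s"
  shows "cesaro_mean x \<longlonglongrightarrow> s"
proof (rule ultra_determine)
  fix U :: "nat filter" assume U: "ultra U" "U \<le> sequentially"
  have "WL U (\<lambda>n. 0) x = s" by (rule all[OF WL_banach[OF U]])
  then show "(cesaro_mean x \<longlongrightarrow> s) U" using WL_tendsto[OF U(1) x, of "\<lambda>n. 0"]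
    by (simp add: cesaro_wavg)
qed

lemma chat_sub_S: "c_hat \<subseteq> seq_S"
  unfolding c_hat_def seq_S_def convergent_def using chat_cesaro by blast

lemma c0hat_sub_S0: "c0_hat \<subseteq> seq_S0"
  unfolding c0_hat_def seq_S0_def using chat_cesaro by blast

lemma cesaro_lin: "cesaro_mean (\<lambda>n. a * x n + b * y n) = (\<lambda>n. a * cesaro_mean x n + b * cesaro_mean y n)"
  unfolding cesaro_wavg by (rule ext, rule wavg_lin)

lemma lin_chat: "x \<in> c_hat \<Longrightarrow> y \<in> c_hat \<Longrightarrow> (\<lambda>n. a * x n + b * y n) \<in> c_hat"
proof -
  assume x: "x \<in> c_hat" and y: "y \<in> c_hat"
  then obtain p q where xl: "x \<in> linf" and yl: "y \<in> linf" and p: "\<And>L. banach_limit L \<Longrightarrow> L x = p"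
    and q: "\<And>L. banach_limit L \<Longrightarrow> L y = q" unfolding c_hat_def by blast
  have "\<forall>L. banach_limit L \<longrightarrow> L (\<lambda>n. a * x n + b * y n) = a * p + b * q"
    using BL_lin[OF _ xl yl] p q by simp
  then show ?thesis unfolding c_hat_def using lin_linf[OF xl yl] by blast
qed

lemma lin_c0hat: "x \<in> c0_hat \<Longrightarrow> y \<in> c0_hat \<Longrightarrow> (\<lambda>n. a * x n + b * y n) \<in> c0_hat"
proof -
  assume x: "x \<in> c0_hat" and y: "y \<in> c0_hat"
  then have xl: "x \<in> linf" and yl: "y \<in> linf" and p: "\<And>L. banach_limit L \<Longrightarrow> L x = 0"
    and q: "\<And>L. banach_limit L \<Longrightarrow> L y = 0" unfolding c0_hat_def by auto
  have "\<forall>L. banach_limit L \<longrightarrow> L (\<lambda>n. a * x n + b * y n) = 0"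
  proof (intro allI impI)
    fix L :: "(nat \<Rightarrow> real) \<Rightarrow> real" assume L: "banach_limit L"
    show "L (\<lambda>n. a * x n + b * y n) = 0" using BL_lin[OF L xl yl, of a b] p[OF L] q[OF L] by simp
  qed
  then show ?thesis unfolding c0_hat_def using lin_linf[OF xl yl] by blast
qed

lemma lin_S: "x \<in> seq_S \<Longrightarrow> y \<in> seq_S \<Longrightarrow> (\<lambda>n. a * x n + b * y n) \<in> seq_S"
proof -
  assume x: "x \<in> seq_S" and y: "y \<in> seq_S"
  then obtain p q where p: "cesaro_mean x \<longlonglongrightarrow> p" and q: "cesaro_mean y \<longlonglongrightarrow> q"
    unfolding seq_S_def convergent_def by blast
  have "(\<lambda>n. a * cesaro_mean x n + b * cesaro_mean y n) \<longlonglongrightarrow> a * p + b * q"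
    by (intro tendsto_intros p q)
  then have "convergent (cesaro_mean (\<lambda>n. a * x n + b * y n))"
    unfolding cesaro_lin by (rule convergentI)
  moreover have "(\<lambda>n. a * x n + b * y n) \<in> linf" using x y lin_linf unfolding seq_S_def by blast
  ultimately show ?thesis unfolding seq_S_def by blast
qed

lemma lin_S0: "x \<in> seq_S0 \<Longrightarrow> y \<in> seq_S0 \<Longrightarrow> (\<lambda>n. a * x n + b * y n) \<in> seq_S0"
proof -
  assume x: "x \<in> seq_S0" and y: "y \<in> seq_S0"
  then have p: "cesaro_mean x \<longlonglongrightarrow> 0" and q: "cesaro_mean y \<longlonglongrightarrow> 0"
    unfolding seq_S0_def by auto
  have "(\<lambda>n. a * cesaro_mean x n + b * cesaro_mean y n) \<longlonglongrightarrow> a * 0 + b * 0"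
    by (intro tendsto_intros p q)
  then have "cesaro_mean (\<lambda>n. a * x n + b * y n) \<longlonglongrightarrow> 0"
    unfolding cesaro_lin by simp
  moreover have "(\<lambda>n. a * x n + b * y n) \<in> linf" using x y lin_linf unfolding seq_S0_def by blast
  ultimately show ?thesis unfolding seq_S0_def by blast
qed

lemma aff_of_lin:
  fixes X :: "(nat \<Rightarrow> real) set"
  assumes "\<And>x y a b. x \<in> X \<Longrightarrow> y \<in> X \<Longrightarrow> (\<lambda>n. a * x n + b * y n) \<in> X"
  shows "\<And>u v t. u \<in> X \<Longrightarrow> v \<in> X \<Longrightarrow> t \<ge> 0 \<Longrightarrow> (\<lambda>n. u n + t * (u n - v n)) \<in> X"
proof -
  fix u v t assume "u \<in> X" "v \<in> X"
  then have "(\<lambda>n. (1 + t) * u n + (- t) * v n) \<in> X" by (rule assms)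
  moreover have "(\<lambda>n. (1 + t) * u n + (- t) * v n) = (\<lambda>n. u n + t * (u n - v n))"
    by (rule ext) (simp add: algebra_simps)
  ultimately show "(\<lambda>n. u n + t * (u n - v n)) \<in> X" by simp
qed


lemma two_sub:
  fixes a v :: "nat \<Rightarrow> real"
  assumes hb: "\<And>n. \<bar>c * a n - v n\<bar> \<le> d" and v: "v \<longlonglongrightarrow> m"
    and s1: "strict_mono s1" "(\<lambda>k. a (s1 k)) \<longlonglongrightarrow> 1"
    and s2: "strict_mono s2" "(\<lambda>k. a (s2 k)) \<longlonglongrightarrow> -1"
  shows "c \<le> d"
proof -
  have v1: "(\<lambda>k. v (s1 k)) \<longlonglongrightarrow> m" using LIMSEQ_subseq_LIMSEQ[OF v s1(1)] by (simp add: o_def)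
  have v2: "(\<lambda>k. v (s2 k)) \<longlonglongrightarrow> m" using LIMSEQ_subseq_LIMSEQ[OF v s2(1)] by (simp add: o_def)
  have "(\<lambda>k. \<bar>c * a (s1 k) - v (s1 k)\<bar>) \<longlonglongrightarrow> \<bar>c * 1 - m\<bar>"
    by (intro tendsto_intros s1(2) v1)
  then have e1: "\<bar>c * 1 - m\<bar> \<le> d"
    by (rule tendsto_upperbound) (auto intro: always_eventually hb)
  have "(\<lambda>k. \<bar>c * a (s2 k) - v (s2 k)\<bar>) \<longlonglongrightarrow> \<bar>c * -1 - m\<bar>"
    by (intro tendsto_intros s2(2) v2)
  then have e2: "\<bar>c * -1 - m\<bar> \<le> d"
    by (rule tendsto_upperbound) (auto intro: always_eventually hb)
  from e1 e2 show ?thesis by linarith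
qed

definition alt :: "nat \<Rightarrow> real" where "alt n = (-1) ^ n"

lemma alt_abs: "\<bar>alt n\<bar> = 1"
  unfolding alt_def by simp

lemma alt_linf: "alt \<in> linf"
  by (rule linfI[of _ 1]) (simp add: alt_abs)

lemma alt_c0hat: "alt \<in> c0_hat"
  unfolding c0_hat_def
proof (intro CollectI conjI allI impI alt_linf)
  fix L :: "(nat \<Rightarrow> real) \<Rightarrow> real" assume L: "banach_limit L"
  have "L (\<lambda>n. alt (Suc n)) = L alt" by (rule BL_shift[OF L alt_linf])
  moreover have "(\<lambda>n. alt (Suc n)) = (\<lambda>n. (-1) * alt n + 0 * alt n)"
    unfolding alt_def by simp
  moreover have "L (\<lambda>n. (-1) * alt n + 0 * alt n) = (-1) * L alt + 0 * L alt"
    by (rule BL_lin[OF L alt_linf alt_linf])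
  ultimately show "L alt = 0" by simp
qed

lemma sepA:
  assumes x: "x \<longlonglongrightarrow> l" and w: "w \<longlonglongrightarrow> l'" and R: "R > 0"
    and d: "supdist (\<lambda>n. x n + R/2 * alt n) w < R/2"
  shows False
proof -
  have xl: "x \<in> linf" and wl: "w \<in> linf" using x w conv_linf by auto
  have zl: "(\<lambda>n. x n + R/2 * alt n) \<in> linf"
    using lin_linf[OF xl alt_linf, of 1 "R/2"] by simp
  have hb: "\<bar>R/2 * alt n - (w n - x n)\<bar> \<le> supdist (\<lambda>n. x n + R/2 * alt n) w" for n
    using supdist_ge[OF zl wl, of n] by (simp add: algebra_simps)
  have v: "(\<lambda>n. w n - x n) \<longlonglongrightarrow> l' - l" by (intro tendsto_intros w x)
  have sm1: "strict_mono (\<lambda>k::nat. 2 * k)" by (simp add: strict_mono_def)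
  have sm2: "strict_mono (\<lambda>k::nat. 2 * k + 1)" by (simp add: strict_mono_def)
  have "R/2 \<le> supdist (\<lambda>n. x n + R/2 * alt n) w"
    by (rule two_sub[OF hb v sm1 _ sm2]) (simp_all add: alt_def)
  then show False using d by linarith
qed

definition sq :: "nat \<Rightarrow> real" where "sq n = (-1) ^ (floor_sqrt n)"

lemma sq_abs: "\<bar>sq n\<bar> = 1"
  unfolding sq_def by simp

lemma sq_on: "K\<^sup>2 \<le> i \<Longrightarrow> i < (Suc K)\<^sup>2 \<Longrightarrow> sq i = (-1) ^ K"
  unfolding sq_def using floor_sqrt_unique by simp

lemma sum_abs_card: "\<bar>\<Sum>i\<in>A. sq i\<bar> \<le> real (card A)"
proof -
  have "\<bar>\<Sum>i\<in>A. sq i\<bar> \<le> (\<Sum>i\<in>A. \<bar>sq i\<bar>)" by (rule sum_abs)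
  also have "\<dots> = real (card A)" by (simp add: sq_abs)
  finally show ?thesis .
qed

lemma sq_partial: "(\<Sum>i<K\<^sup>2. sq i) = (-1) ^ (Suc K) * real K"
proof (induction K)
  case 0 then show ?case by simp
next
  case (Suc K)
  have le: "K\<^sup>2 \<le> (Suc K)\<^sup>2" by (simp add: power2_eq_square)
  have "(\<Sum>i<(Suc K)\<^sup>2. sq i) = (\<Sum>i\<in>{0..<K\<^sup>2}. sq i) + (\<Sum>i\<in>{K\<^sup>2..<(Suc K)\<^sup>2}. sq i)"
    using sum.atLeastLessThan_concat[of 0 "K\<^sup>2" "(Suc K)\<^sup>2" sq] le by (simp add: atLeast0LessThan)
  also have "(\<Sum>i\<in>{K\<^sup>2..<(Suc K)\<^sup>2}. sq i) = (\<Sum>i\<in>{K\<^sup>2..<(Suc K)\<^sup>2}. (-1) ^ K)"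
    by (rule sum.cong) (auto intro: sq_on)
  also have "\<dots> = real ((Suc K)\<^sup>2 - K\<^sup>2) * (-1) ^ K" by simp
  also have "real ((Suc K)\<^sup>2 - K\<^sup>2) = 2 * real K + 1"
    using le by (simp add: of_nat_diff power2_eq_square algebra_simps)
  finally show ?case using Suc by (simp add: atLeast0LessThan algebra_simps)
qed

lemma sq_partial_bound: "\<bar>\<Sum>i\<le>n. sq i\<bar> \<le> 3 * real (floor_sqrt n) + 1"
proof -
  define K where "K = floor_sqrt n"
  have K1: "K\<^sup>2 \<le> n" unfolding K_def by simp
  have K2: "n < (Suc K)\<^sup>2" unfolding K_def by (rule Suc_floor_sqrt_power2_gt)
  have "(\<Sum>i\<le>n. sq i) = (\<Sum>i\<in>{0..<K\<^sup>2}. sq i) + (\<Sum>i\<in>{K\<^sup>2..<Suc n}. sq i)"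
    using sum.atLeastLessThan_concat[of 0 "K\<^sup>2" "Suc n" sq] K1
    by (simp add: atLeast0LessThan lessThan_Suc_atMost)
  also have "(\<Sum>i\<in>{0..<K\<^sup>2}. sq i) = (-1) ^ (Suc K) * real K"
    using sq_partial[of K] by (simp add: atLeast0LessThan)
  finally have eq: "(\<Sum>i\<le>n. sq i) = (-1) ^ (Suc K) * real K + (\<Sum>i\<in>{K\<^sup>2..<Suc n}. sq i)" .
  have "\<bar>\<Sum>i\<in>{K\<^sup>2..<Suc n}. sq i\<bar> \<le> real (card {K\<^sup>2..<Suc n})" by (rule sum_abs_card)
  also have "card {K\<^sup>2..<Suc n} = Suc n - K\<^sup>2" by simp
  also have "real (Suc n - K\<^sup>2) \<le> 2 * real K + 1"
  proof -
    have "Suc n \<le> K\<^sup>2 + 2 * K + 1" using K2 by (simp add: power2_eq_square)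
    then have "Suc n - K\<^sup>2 \<le> 2 * K + 1" by linarith
    then have "real (Suc n - K\<^sup>2) \<le> real (2 * K + 1)" by (simp only: of_nat_le_iff)
    then show ?thesis by simp
  qed
  finally have "\<bar>\<Sum>i\<in>{K\<^sup>2..<Suc n}. sq i\<bar> \<le> 2 * real K + 1" .
  moreover have "\<bar>(-1) ^ (Suc K) * real K\<bar> = real K" by (simp add: abs_mult)
  ultimately show ?thesis unfolding eq K_def[symmetric] by linarith
qed

lemma sqrt_over: "(\<lambda>n. 4 / sqrt (real (Suc n))) \<longlonglongrightarrow> 0"
proof -
  have "filterlim (\<lambda>n. sqrt (real n)) at_top sequentially"
    by (rule filterlim_compose[OF sqrt_at_top filterlim_real_sequentially])
  then have "(\<lambda>n. 4 / sqrt (real n)) \<longlonglongrightarrow> 0"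
    by (intro tendsto_divide_0[OF tendsto_const] filterlim_at_top_imp_at_infinity)
  then show ?thesis by (rule LIMSEQ_Suc)
qed

lemma sq_aux:
  fixes k t :: real
  assumes "k\<^sup>2 \<le> t" "0 \<le> t"
  shows "(3 * k + 1)\<^sup>2 \<le> 16 * (t + 1)"
proof -
  have C: "0 \<le> k * k - 2 * k + 1"
    using zero_le_power2[of "k - 1"] by (simp add: power2_eq_square algebra_simps)
  have A: "(3 * k + 1)\<^sup>2 = 9 * (k * k) + 6 * k + 1"
    by (simp add: power2_eq_square algebra_simps)
  have T: "k * k \<le> t" using assms(1) by (simp add: power2_eq_square)
  have E: "16 * (t + 1) - (9 * (k * k) + 6 * k + 1) = 16 * (t - k * k) + 3 * (k * k - 2 * k + 1) + 4 * (k * k) + 12"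
    by (simp add: algebra_simps)
  have "0 \<le> 16 * (t - k * k) + 3 * (k * k - 2 * k + 1) + 4 * (k * k) + 12"
  proof -
    have p1: "0 \<le> 16 * (t - k * k)" using T by simp
    have p2: "0 \<le> 3 * (k * k - 2 * k + 1)" using C by simp
    have p3: "0 \<le> 4 * (k * k)" by simp
    show ?thesis by (intro add_nonneg_nonneg p1 p2 p3) simp
  qed
  then show ?thesis unfolding A using E by linarith
qed

lemma sq_S0: "sq \<in> seq_S0"
proof -
  have "sq \<in> linf" by (rule linfI[of _ 1]) (simp add: sq_abs)
  moreover have "cesaro_mean sq \<longlonglongrightarrow> 0"
  proof (rule Lim_null_comparison)
    show "eventually (\<lambda>n. norm (cesaro_mean sq n) \<le> 4 / sqrt (real (Suc n))) sequentially"
    proof (intro always_eventually allI)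
      fix n
      define K where "K = floor_sqrt n"
      have K1: "K\<^sup>2 \<le> n" unfolding K_def by simp
      have pos: "real (Suc n) > 0" by simp
      have "(3 * real K + 1)\<^sup>2 \<le> 16 * real (Suc n)"
      proof -
        have "real (K\<^sup>2) \<le> real n" using K1 by linarith
        then have "(real K)\<^sup>2 \<le> real n" by simp
        then show ?thesis using sq_aux[of "real K" "real n"] by simp
      qed
      then have b: "3 * real K + 1 \<le> sqrt (16 * real (Suc n))" by (rule real_le_rsqrt)
      have "sqrt (16 * real (Suc n)) = 4 * sqrt (real (Suc n))"
      proof -
        have b: "sqrt (16::real) = 4" by (rule real_sqrt_unique) simp_all
        have "sqrt (16 * real (Suc n)) = sqrt 16 * sqrt (real (Suc n))" by (rule real_sqrt_mult)
        then show ?thesis unfolding b .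
      qed
      then have b2: "3 * real K + 1 \<le> 4 * sqrt (real (Suc n))" using b by simp
      have "\<bar>cesaro_mean sq n\<bar> = \<bar>\<Sum>i\<le>n. sq i\<bar> / real (Suc n)"
        unfolding cesaro_mean_def by simp
      also have "\<dots> \<le> (3 * real K + 1) / real (Suc n)"
        using sq_partial_bound[of n] pos unfolding K_def by (simp add: divide_right_mono)
      also have "\<dots> \<le> 4 * sqrt (real (Suc n)) / real (Suc n)"
        using b2 pos by (simp add: divide_right_mono)
      also have "4 * sqrt (real (Suc n)) / real (Suc n) = 4 / sqrt (real (Suc n))"
      proof -
        define s where "s = sqrt (real (Suc n))"
        have e: "real (Suc n) = s * s" unfolding s_def by simp
        have "s > 0" unfolding s_def by simp
        then show ?thesis unfolding e s_def[symmetric] by (simp add: field_simps)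
      qed
      finally show "norm (cesaro_mean sq n) \<le> 4 / sqrt (real (Suc n))" by simp
    qed
    show "(\<lambda>n. 4 / sqrt (real (Suc n))) \<longlonglongrightarrow> 0" by (rule sqrt_over)
  qed
  ultimately show ?thesis unfolding seq_S0_def by blast
qed


lemma wavg_cmp:
  assumes "\<And>i. i < Suc n \<Longrightarrow> p (m n + i) \<le> q (m n + i)"
  shows "wavg m p n \<le> wavg m q n"
  unfolding wavg_def using assms by (intro divide_right_mono sum_mono) auto

lemma wavg_addc: "wavg m (\<lambda>j. x j + c) n = wavg m x n + c"
proof -
  have "(\<Sum>i<Suc n. x (m n + i) + c) = (\<Sum>i<Suc n. x (m n + i)) + real (Suc n) * c"
    by (simp add: sum.distrib del: sum.lessThan_Suc)
  then show ?thesis unfolding wavg_def by (simp add: add_divide_distrib del: sum.lessThan_Suc)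
qed

lemma sq_win1:
  assumes "i < Suc n" shows "sq ((2 * n)\<^sup>2 + i) = 1"
proof -
  have e: "(Suc (2 * n))\<^sup>2 = (2 * n)\<^sup>2 + (4 * n + 1)" by (simp add: power2_eq_square algebra_simps)
  have "sq ((2 * n)\<^sup>2 + i) = (-1) ^ (2 * n)"
    by (rule sq_on) (use assms e in linarith)+
  then show ?thesis by simp
qed

lemma sq_win2:
  assumes "i < Suc n" shows "sq ((2 * n + 1)\<^sup>2 + i) = -1"
proof -
  have e: "(Suc (2 * n + 1))\<^sup>2 = (2 * n + 1)\<^sup>2 + (4 * n + 3)" by (simp add: power2_eq_square algebra_simps)
  have "sq ((2 * n + 1)\<^sup>2 + i) = (-1) ^ (2 * n + 1)"
    by (rule sq_on) (use assms e in linarith)+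
  then show ?thesis by simp
qed

lemma sepB:
  assumes x: "x \<in> c_hat" and w: "w \<in> c_hat" and R: "R > 0"
    and d: "supdist (\<lambda>n. x n + R/2 * sq n) w < R/2"
  shows False
proof -
  have xl: "x \<in> linf" and wl: "w \<in> linf" using x w unfolding c_hat_def by auto
  have sql: "sq \<in> linf" by (rule linfI[of _ 1]) (simp add: sq_abs)
  have zl: "(\<lambda>n. x n + R/2 * sq n) \<in> linf"
    using lin_linf[OF xl sql, of 1 "R/2"] by simp
  define \<delta> where "\<delta> = supdist (\<lambda>n. x n + R/2 * sq n) w"
  have hz: "\<bar>x j + R/2 * sq j - w j\<bar> \<le> \<delta>" for j
    unfolding \<delta>_def using supdist_ge[OF zl wl, of j] by simp
  obtain U where U: "ultra U" "U \<le> sequentially" using ultra_seq_exists by blast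
  have nb: "U \<noteq> bot" by (rule ultra_nonbot[OF U(1)])
  define m1 where "m1 = (\<lambda>n::nat. (2 * n)\<^sup>2)"
  define m2 where "m2 = (\<lambda>n::nat. (2 * n + 1)\<^sup>2)"
  have le1: "wavg m1 x n + (R/2 - \<delta>) \<le> wavg m1 w n" for n
  proof -
    have "wavg m1 (\<lambda>j. x j + (R/2 - \<delta>)) n \<le> wavg m1 w n"
    proof (rule wavg_cmp)
      fix i assume "i < Suc n"
      then have "sq (m1 n + i) = 1" unfolding m1_def by (rule sq_win1)
      then show "x (m1 n + i) + (R/2 - \<delta>) \<le> w (m1 n + i)" using hz[of "m1 n + i"] by (simp add: abs_le_iff)
    qed
    then show ?thesis by (simp add: wavg_addc)
  qed
  have le2: "wavg m2 w n \<le> wavg m2 x n + (- (R/2 - \<delta>))" for n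
  proof -
    have "wavg m2 w n \<le> wavg m2 (\<lambda>j. x j + (- (R/2 - \<delta>))) n"
    proof (rule wavg_cmp)
      fix i assume "i < Suc n"
      then have "sq (m2 n + i) = -1" unfolding m2_def by (rule sq_win2)
      then show "w (m2 n + i) \<le> x (m2 n + i) + (- (R/2 - \<delta>))" using hz[of "m2 n + i"] by (simp add: abs_le_iff)
    qed
    then show ?thesis by (simp add: wavg_addc)
  qed
  have t1: "WL U m1 x + (R/2 - \<delta>) \<le> WL U m1 w"
    by (rule tendsto_le[OF nb WL_tendsto[OF U(1) wl] tendsto_add[OF WL_tendsto[OF U(1) xl] tendsto_const]])
       (intro always_eventually allI le1)
  have t2: "WL U m2 w \<le> WL U m2 x + (- (R/2 - \<delta>))"
    by (rule tendsto_le[OF nb tendsto_add[OF WL_tendsto[OF U(1) xl] tendsto_const] WL_tendsto[OF U(1) wl]])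
       (intro always_eventually allI le2)
  obtain s where s: "\<And>L. banach_limit L \<Longrightarrow> L x = s" using x unfolding c_hat_def by blast
  obtain s' where s': "\<And>L. banach_limit L \<Longrightarrow> L w = s'" using w unfolding c_hat_def by blast
  have "WL U m1 x = s" "WL U m2 x = s" "WL U m1 w = s'" "WL U m2 w = s'"
    using s s' WL_banach[OF U] by auto
  then show False using t1 t2 d unfolding \<delta>_def by linarith
qed

definition blk :: "nat \<Rightarrow> real" where "blk n = (-1) ^ (floor_log (floor_log n))"

lemma blk_abs: "\<bar>blk n\<bar> = 1"
  unfolding blk_def by simp

lemma blk_linf: "blk \<in> linf"
  by (rule linfI[of _ 1]) (simp add: blk_abs)

lemma blk_on:
  assumes i1: "2 ^ (2 ^ j) \<le> i" and i2: "i < 2 ^ (2 ^ Suc j)"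
  shows "blk i = (-1) ^ j"
proof -
  have ipos: "i > 0" using i1 by (metis less_le_trans nat_zero_less_power_iff pos2 zero_less_numeral)
  define f where "f = floor_log i"
  have f1: "2 ^ j \<le> f"
    using floor_log_le_iff[OF i1] unfolding f_def by simp
  have "(2::nat) ^ f \<le> i" unfolding f_def by (rule floor_log_exp2_le[OF ipos])
  then have "(2::nat) ^ f < 2 ^ (2 ^ Suc j)" using i2 by linarith
  then have f2: "f < 2 ^ Suc j" using power_strict_increasing_iff[of "2::nat" f] by simp
  have fpos: "f > 0" using f1 by (metis less_le_trans nat_zero_less_power_iff pos2)
  have "floor_log f = j" by (rule floor_log_eqI[OF fpos f1]) (use f2 in simp)
  then show ?thesis unfolding blk_def f_def[symmetric] by simp
qed

lemma block_sum:
  fixes h :: "nat \<Rightarrow> real"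
  assumes hb: "\<And>i. \<bar>h i\<bar> \<le> 1" and ha: "\<And>i. a \<le> i \<Longrightarrow> i \<le> n \<Longrightarrow> h i = \<sigma>" and s: "\<bar>\<sigma>\<bar> = 1"
  shows "\<bar>(\<Sum>i\<le>n. h i) - real (Suc n) * \<sigma>\<bar> \<le> 2 * real a"
proof -
  have "(\<Sum>i\<le>n. h i) - real (Suc n) * \<sigma> = (\<Sum>i\<le>n. h i - \<sigma>)"
    by (simp add: sum_subtractf)
  also have "\<bar>\<dots>\<bar> \<le> (\<Sum>i\<le>n. \<bar>h i - \<sigma>\<bar>)" by (rule sum_abs)
  also have "\<dots> \<le> (\<Sum>i\<le>n. if i < a then 2 else 0)"
  proof (rule sum_mono)
    fix i assume "i \<in> {..n}"
    then show "\<bar>h i - \<sigma>\<bar> \<le> (if i < a then 2 else 0)"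
      using hb[of i] s ha[of i] by (auto simp: abs_le_iff)
  qed
  also have "\<dots> = (\<Sum>i\<in>{i\<in>{..n}. i < a}. 2)"
    by (rule sum.inter_filter[symmetric]) simp
  also have "\<dots> = 2 * real (card {i\<in>{..n}. i < a})" by simp
  also have "card {i\<in>{..n}. i < a} \<le> card {..<a}"
    by (rule card_mono) auto
  then have "2 * real (card {i\<in>{..n}. i < a}) \<le> 2 * real a" by simp
  finally show ?thesis .
qed

definition NN :: "nat \<Rightarrow> nat" where "NN j = 2 ^ (2 ^ Suc j) - 1"

lemma blk_cm: "\<bar>cesaro_mean blk (NN j) - (-1) ^ j\<bar> \<le> 2 / real (Suc j)"
proof -
  define a :: nat where "a = 2 ^ (2 ^ j)"
  define n where "n = NN j"
  have apos: "a \<ge> 1" unfolding a_def by simp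
  have sq: "(2::nat) ^ (2 ^ Suc j) = a * a" unfolding a_def
    by (simp add: power_mult[symmetric] power_add[symmetric] mult_2)
  have Sn: "Suc n = a * a" unfolding n_def NN_def sq using apos by simp
  have Sj: "Suc j \<le> a"
  proof -
    have "Suc j \<le> 2 ^ j" by (rule Suc_leI[OF less_exp[of j]])
    also have "(2::nat) ^ j \<le> a" unfolding a_def using less_exp[of "2 ^ j"] by simp
    finally show ?thesis .
  qed
  have bs: "\<bar>(\<Sum>i\<le>n. blk i) - real (Suc n) * (-1) ^ j\<bar> \<le> 2 * real a"
  proof (rule block_sum)
    fix i assume "a \<le> i" "i \<le> n"
    then show "blk i = (-1) ^ j"
      using Sn sq unfolding a_def by (intro blk_on) auto
  qed (simp_all add: blk_abs)
  define A where "A = real a"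
  have A1: "A \<ge> 1" unfolding A_def using apos by simp
  have SnA: "real (Suc n) = A * A" unfolding A_def using Sn by (metis of_nat_mult)
  have "cesaro_mean blk n - (-1) ^ j = ((\<Sum>i\<le>n. blk i) - real (Suc n) * (-1) ^ j) / real (Suc n)"
    unfolding cesaro_mean_def by (simp add: field_simps del: of_nat_Suc)
  then have "\<bar>cesaro_mean blk n - (-1) ^ j\<bar> = \<bar>(\<Sum>i\<le>n. blk i) - real (Suc n) * (-1) ^ j\<bar> / (A * A)"
    using SnA by simp
  also have "\<dots> \<le> 2 * A / (A * A)" using bs A1 unfolding A_def by (intro divide_right_mono) auto
  also have "\<dots> = 2 / A" using A1 by (simp add: field_simps)
  also have "\<dots> \<le> 2 / real (Suc j)" using Sj A1 unfolding A_def
    by (intro divide_left_mono) auto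
  finally show ?thesis unfolding n_def .
qed

lemma NN_mono: "strict_mono NN"
  unfolding strict_mono_Suc_iff
proof
  fix j
  have "(2::nat) ^ (2 ^ Suc j) < 2 ^ (2 ^ Suc (Suc j))" by simp
  moreover have "(1::nat) \<le> 2 ^ (2 ^ Suc j)" by simp
  ultimately show "NN j < NN (Suc j)" unfolding NN_def by linarith
qed

lemma blk_lim:
  assumes sm: "strict_mono (r :: nat \<Rightarrow> nat)" and sg: "\<And>k. (-1::real) ^ r k = \<sigma>"
  shows "strict_mono (\<lambda>k. NN (r k))" "(\<lambda>k. cesaro_mean blk (NN (r k))) \<longlonglongrightarrow> \<sigma>"
proof -
  show "strict_mono (\<lambda>k. NN (r k))"
    using NN_mono sm by (simp add: strict_mono_def)
  have "(\<lambda>k. cesaro_mean blk (NN (r k)) - \<sigma>) \<longlonglongrightarrow> 0"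
  proof (rule Lim_null_comparison)
    show "eventually (\<lambda>k. norm (cesaro_mean blk (NN (r k)) - \<sigma>) \<le> 2 / real (Suc k)) sequentially"
    proof (intro always_eventually allI)
      fix k
      have "k \<le> r k" using sm by (rule strict_mono_imp_increasing)
      then have "2 / real (Suc (r k)) \<le> 2 / real (Suc k)" by (intro divide_left_mono) auto
      then show "norm (cesaro_mean blk (NN (r k)) - \<sigma>) \<le> 2 / real (Suc k)"
        using blk_cm[of "r k"] sg[of k] by simp
    qed
    show "(\<lambda>k. 2 / real (Suc k)) \<longlonglongrightarrow> 0" by (rule lim_over_Suc)
  qed
  then show "(\<lambda>k. cesaro_mean blk (NN (r k))) \<longlonglongrightarrow> \<sigma>" by (rule LIM_zero_cancel)
qed

lemma cesaro_comb: "cesaro_mean (\<lambda>i. x i + c * h i - w i) n = cesaro_mean x n + c * cesaro_mean h n - cesaro_mean w n"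
  unfolding cesaro_mean_def
  by (simp add: sum.distrib sum_subtractf sum_distrib_left add_divide_distrib diff_divide_distrib del: sum.atMost_Suc)

lemma sepC:
  assumes x: "x \<in> seq_S" and w: "w \<in> seq_S" and R: "R > 0"
    and d: "supdist (\<lambda>n. x n + R/2 * blk n) w < R/2"
  shows False
proof -
  have xl: "x \<in> linf" and wl: "w \<in> linf" using x w unfolding seq_S_def by auto
  have zl: "(\<lambda>n. x n + R/2 * blk n) \<in> linf"
    using lin_linf[OF xl blk_linf, of 1 "R/2"] by simp
  define \<delta> where "\<delta> = supdist (\<lambda>n. x n + R/2 * blk n) w"
  have hz: "\<bar>x j + R/2 * blk j - w j\<bar> \<le> \<delta>" for j
    unfolding \<delta>_def using supdist_ge[OF zl wl, of j] by simp
  obtain p q where p: "cesaro_mean x \<longlonglongrightarrow> p" and q: "cesaro_mean w \<longlonglongrightarrow> q"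
    using x w unfolding seq_S_def convergent_def by blast
  have v: "(\<lambda>n. cesaro_mean w n - cesaro_mean x n) \<longlonglongrightarrow> q - p" by (intro tendsto_intros p q)
  have hb: "\<bar>R/2 * cesaro_mean blk n - (cesaro_mean w n - cesaro_mean x n)\<bar> \<le> \<delta>" for n
  proof -
    have "\<bar>cesaro_mean (\<lambda>i. x i + R/2 * blk i - w i) n\<bar> \<le> \<delta>"
      unfolding cesaro_wavg by (rule wavg_bound) (rule hz)
    then show ?thesis unfolding cesaro_comb by (simp add: algebra_simps)
  qed
  have sm1: "strict_mono (\<lambda>k::nat. 2 * k)" by (simp add: strict_mono_def)
  have sm2: "strict_mono (\<lambda>k::nat. 2 * k + 1)" by (simp add: strict_mono_def)
  have l1: "strict_mono (\<lambda>k. NN (2 * k))" "(\<lambda>k. cesaro_mean blk (NN (2 * k))) \<longlonglongrightarrow> 1"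
    by (rule blk_lim[OF sm1]; simp)+
  have l2: "strict_mono (\<lambda>k. NN (2 * k + 1))" "(\<lambda>k. cesaro_mean blk (NN (2 * k + 1))) \<longlonglongrightarrow> -1"
    by (rule blk_lim[OF sm2]; simp)+
  have "R/2 \<le> \<delta>" by (rule two_sub[OF hb v l1 l2])
  then show False using d unfolding \<delta>_def by linarith
qed


lemma supdist_shift:
  assumes "\<And>n. \<bar>h n\<bar> \<le> 1" and "R > 0"
  shows "supdist x (\<lambda>n. x n + R/2 * h n) \<le> R/2"
proof (rule supdist_le)
  fix n
  have "\<bar>x n - (x n + R/2 * h n)\<bar> = R/2 * \<bar>h n\<bar>" using assms(2) by (simp add: abs_mult)
  also have "\<dots> \<le> R/2 * 1" using assms by (intro mult_left_mono) auto
  finally show "\<bar>x n - (x n + R/2 * h n)\<bar> \<le> R/2" by simp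
qed

theorem theorem2p6:
  shows "strongly_lower_porous c_hat supdist seq_c \<and>
         strongly_lower_porous c0_hat supdist seq_c0 \<and>
         strongly_lower_porous seq_S supdist c_hat \<and>
         strongly_lower_porous seq_S0 supdist c0_hat \<and>
         strongly_lower_porous linf supdist seq_S"
proof (intro conjI)
  show "strongly_lower_porous c_hat supdist seq_c"
  proof (rule porous_generic)
    show "c_hat \<subseteq> linf" unfolding c_hat_def by blast
    show "seq_c \<subseteq> c_hat" by (rule c_sub_chat)
    show "\<And>u v t. u \<in> c_hat \<Longrightarrow> v \<in> c_hat \<Longrightarrow> 0 \<le> t \<Longrightarrow> (\<lambda>n. u n + t * (u n - v n)) \<in> c_hat"
      by (rule aff_of_lin[OF lin_chat])
    fix x R assume x: "x \<in> seq_c" and R: "(R::real) > 0"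
    have "(\<lambda>n. 1 * x n + R/2 * alt n) \<in> c_hat"
      using x c_sub_chat alt_c0hat c0hat_sub_chat by (intro lin_chat) auto
    then have zY: "(\<lambda>n. x n + R/2 * alt n) \<in> c_hat" by simp
    obtain l where l: "x \<longlonglongrightarrow> l" using x unfolding seq_c_def convergent_def by blast
    show "\<exists>z\<in>c_hat. supdist x z \<le> R/2 \<and> (\<forall>w\<in>c_hat. supdist z w < R/2 \<longrightarrow> w \<notin> seq_c)"
    proof (intro bexI[OF _ zY] conjI ballI impI)
      show "supdist x (\<lambda>n. x n + R/2 * alt n) \<le> R/2" using R by (intro supdist_shift) (simp_all add: alt_abs)
    next
      fix w assume "supdist (\<lambda>n. x n + R/2 * alt n) w < R/2"
      then show "w \<notin> seq_c" using sepA[OF l _ R] unfolding seq_c_def convergent_def by blast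
    qed
  qed
next
  show "strongly_lower_porous c0_hat supdist seq_c0"
  proof (rule porous_generic)
    show "c0_hat \<subseteq> linf" unfolding c0_hat_def by blast
    show "seq_c0 \<subseteq> c0_hat" by (rule c0_sub_c0hat)
    show "\<And>u v t. u \<in> c0_hat \<Longrightarrow> v \<in> c0_hat \<Longrightarrow> 0 \<le> t \<Longrightarrow> (\<lambda>n. u n + t * (u n - v n)) \<in> c0_hat"
      by (rule aff_of_lin[OF lin_c0hat])
    fix x R assume x: "x \<in> seq_c0" and R: "(R::real) > 0"
    have "(\<lambda>n. 1 * x n + R/2 * alt n) \<in> c0_hat"
      using x c0_sub_c0hat alt_c0hat by (intro lin_c0hat) auto
    then have zY: "(\<lambda>n. x n + R/2 * alt n) \<in> c0_hat" by simp
    have l: "x \<longlonglongrightarrow> 0" using x unfolding seq_c0_def by blast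
    show "\<exists>z\<in>c0_hat. supdist x z \<le> R/2 \<and> (\<forall>w\<in>c0_hat. supdist z w < R/2 \<longrightarrow> w \<notin> seq_c0)"
    proof (intro bexI[OF _ zY] conjI ballI impI)
      show "supdist x (\<lambda>n. x n + R/2 * alt n) \<le> R/2" using R by (intro supdist_shift) (simp_all add: alt_abs)
    next
      fix w assume "supdist (\<lambda>n. x n + R/2 * alt n) w < R/2"
      then show "w \<notin> seq_c0" using sepA[OF l _ R] unfolding seq_c0_def by blast
    qed
  qed
next
  show "strongly_lower_porous seq_S supdist c_hat"
  proof (rule porous_generic)
    show "seq_S \<subseteq> linf" unfolding seq_S_def by blast
    show "c_hat \<subseteq> seq_S" by (rule chat_sub_S)
    show "\<And>u v t. u \<in> seq_S \<Longrightarrow> v \<in> seq_S \<Longrightarrow> 0 \<le> t \<Longrightarrow> (\<lambda>n. u n + t * (u n - v n)) \<in> seq_S"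
      by (rule aff_of_lin[OF lin_S])
    fix x R assume x: "x \<in> c_hat" and R: "(R::real) > 0"
    have "(\<lambda>n. 1 * x n + R/2 * sq n) \<in> seq_S"
      using x chat_sub_S sq_S0 S0_sub_S by (intro lin_S) auto
    then have zY: "(\<lambda>n. x n + R/2 * sq n) \<in> seq_S" by simp
    show "\<exists>z\<in>seq_S. supdist x z \<le> R/2 \<and> (\<forall>w\<in>seq_S. supdist z w < R/2 \<longrightarrow> w \<notin> c_hat)"
    proof (intro bexI[OF _ zY] conjI ballI impI)
      show "supdist x (\<lambda>n. x n + R/2 * sq n) \<le> R/2" using R by (intro supdist_shift) (simp_all add: sq_abs)
    next
      fix w assume "supdist (\<lambda>n. x n + R/2 * sq n) w < R/2"
      then show "w \<notin> c_hat" using sepB[OF x _ R] by blast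
    qed
  qed
next
  show "strongly_lower_porous seq_S0 supdist c0_hat"
  proof (rule porous_generic)
    show "seq_S0 \<subseteq> linf" unfolding seq_S0_def by blast
    show "c0_hat \<subseteq> seq_S0" by (rule c0hat_sub_S0)
    show "\<And>u v t. u \<in> seq_S0 \<Longrightarrow> v \<in> seq_S0 \<Longrightarrow> 0 \<le> t \<Longrightarrow> (\<lambda>n. u n + t * (u n - v n)) \<in> seq_S0"
      by (rule aff_of_lin[OF lin_S0])
    fix x R assume x: "x \<in> c0_hat" and R: "(R::real) > 0"
    have "(\<lambda>n. 1 * x n + R/2 * sq n) \<in> seq_S0"
      using x c0hat_sub_S0 sq_S0 by (intro lin_S0) auto
    then have zY: "(\<lambda>n. x n + R/2 * sq n) \<in> seq_S0" by simp
    have xc: "x \<in> c_hat" using x c0hat_sub_chat by blast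
    show "\<exists>z\<in>seq_S0. supdist x z \<le> R/2 \<and> (\<forall>w\<in>seq_S0. supdist z w < R/2 \<longrightarrow> w \<notin> c0_hat)"
    proof (intro bexI[OF _ zY] conjI ballI impI)
      show "supdist x (\<lambda>n. x n + R/2 * sq n) \<le> R/2" using R by (intro supdist_shift) (simp_all add: sq_abs)
    next
      fix w assume "supdist (\<lambda>n. x n + R/2 * sq n) w < R/2"
      then show "w \<notin> c0_hat" using sepB[OF xc _ R] c0hat_sub_chat by blast
    qed
  qed
next
  show "strongly_lower_porous linf supdist seq_S"
  proof (rule porous_generic)
    show "linf \<subseteq> linf" by simp
    show "seq_S \<subseteq> linf" unfolding seq_S_def by blast
    show "\<And>u v t. u \<in> linf \<Longrightarrow> v \<in> linf \<Longrightarrow> 0 \<le> t \<Longrightarrow> (\<lambda>n. u n + t * (u n - v n)) \<in> linf"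
      by (rule aff_of_lin[OF lin_linf])
    fix x R assume x: "x \<in> seq_S" and R: "(R::real) > 0"
    have "(\<lambda>n. 1 * x n + R/2 * blk n) \<in> linf"
      using x blk_linf unfolding seq_S_def by (intro lin_linf) auto
    then have zY: "(\<lambda>n. x n + R/2 * blk n) \<in> linf" by simp
    show "\<exists>z\<in>linf. supdist x z \<le> R/2 \<and> (\<forall>w\<in>linf. supdist z w < R/2 \<longrightarrow> w \<notin> seq_S)"
    proof (intro bexI[OF _ zY] conjI ballI impI)
      show "supdist x (\<lambda>n. x n + R/2 * blk n) \<le> R/2" using R by (intro supdist_shift) (simp_all add: blk_abs)
    next
      fix w assume "supdist (\<lambda>n. x n + R/2 * blk n) w < R/2"
      then show "w \<notin> seq_S" using sepC[OF x _ R] by blast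
    qed
  qed
qed

end
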